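(* For $n\geq1$, $\sum_{\pi\in\mathfrak{S}_n}x^{\mathrm{cpk}(\pi)}(-1)^{n-\mathrm{cyc}(\pi)}=(1-x)^{\lfloor n/2\rfloor}$.
   Context: For $\pi\in\mathfrak{S}_n$, $\mathrm{cyc}(\pi)$ is the number of cycles and a cycle peak is an $i\in[n]$ with $\pi^{-1}(i)<i>\pi(i)$; $\mathrm{cpk}(\pi)$ is the number of cycle peaks. *)

theory Defs
  imports "HOL-Combinatorics.Combinatorics" "HOL-Computational_Algebra.Polynomial"
begin

definition perm_cycle :: "(nat \<Rightarrow> nat) \<Rightarrow> nat \<Rightarrow> nat set" where
  "perm_cycle p i = {(p ^^ k) i | k. True}"

definition cyc :: "nat \<Rightarrow> (nat \<Rightarrow> nat) \<Rightarrow> nat" where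
  "cyc n p = card (perm_cycle p ` {1..n})"

definition cpk :: "nat \<Rightarrow> (nat \<Rightarrow> nat) \<Rightarrow> nat" where
  "cpk n p = card {i \<in> {1..n}. inv p i < i \<and> p i < i}"

end

theory Submission
  imports Defs
begin

lemma pc_self: "x \<in> perm_cycle p x"
  unfolding perm_cycle_def by (auto intro: exI[of _ 0])

lemma pc_closed: assumes "y \<in> perm_cycle p x" shows "p y \<in> perm_cycle p x"
proof -
  obtain k where "y = (p ^^ k) x" using assms by (auto simp: perm_cycle_def)
  then have "p y = (p ^^ Suc k) x" by simp
  then show ?thesis unfolding perm_cycle_def by blast
qed

lemma pc_min: assumes "x \<in> A" "\<And>y. y \<in> A \<Longrightarrow> p y \<in> A"
  shows "perm_cycle p x \<subseteq> A"
proof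
  fix z assume "z \<in> perm_cycle p x"
  then obtain k where "z = (p ^^ k) x" unfolding perm_cycle_def by auto
  moreover have "(p ^^ k) x \<in> A" for k by (induction k) (use assms in auto)
  ultimately show "z \<in> A" by simp
qed

lemma pc_sym: assumes "p permutes S" "finite S" "y \<in> perm_cycle p x"
  shows "x \<in> perm_cycle p y"
proof -
  have "permutation p" using assms permutes_imp_permutation by blast
  then obtain m where m: "(p ^^ m) = id" "m > 0" by (rule permutation_is_nilpotent)
  obtain k where k: "y = (p ^^ k) x" using assms(3) unfolding perm_cycle_def by auto
  have pm: "p ^^ (m * k) = id" by (induction k) (simp_all add: funpow_add m)
  have "x = (p ^^ (m * k)) x" by (simp add: pm)
  also have "\<dots> = (p ^^ ((m * k - k) + k)) x"
  proof -
    have "m * k = (m * k - k) + k" using m(2) by (cases m) auto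
    then show ?thesis by simp
  qed
  also have "\<dots> = (p ^^ (m * k - k)) y" by (simp add: k funpow_add)
  finally show ?thesis unfolding perm_cycle_def by blast
qed

lemma pc_eq: assumes "p permutes S" "finite S" "y \<in> perm_cycle p x"
  shows "perm_cycle p y = perm_cycle p x"
proof
  show "perm_cycle p y \<subseteq> perm_cycle p x" by (rule pc_min) (use assms pc_closed in auto)
  have "x \<in> perm_cycle p y" using pc_sym assms by blast
  then show "perm_cycle p x \<subseteq> perm_cycle p y" by (rule pc_min) (use pc_closed in auto)
qed

lemma pc_sub: assumes "p permutes S" "x \<in> S" shows "perm_cycle p x \<subseteq> S"
  by (rule pc_min) (use assms permutes_in_image[OF assms(1)] in auto)

lemma pc_out: assumes "p permutes S" "x \<notin> S" shows "perm_cycle p x = {x}"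
proof
  show "perm_cycle p x \<subseteq> {x}" by (rule pc_min) (use assms permutes_not_in in auto)
qed (simp add: pc_self)

lemma cyc_fix:
  assumes "finite S" "n \<notin> S" "q permutes S"
  shows "card (perm_cycle q ` insert n S) = Suc (card (perm_cycle q ` S))"
proof -
  have "perm_cycle q ` insert n S = insert {n} (perm_cycle q ` S)"
    using pc_out[OF assms(3,2)] by simp
  moreover have "{n} \<notin> perm_cycle q ` S"
    using pc_sub[OF assms(3)] assms(2) by blast
  ultimately show ?thesis using assms(1) by simp
qed

lemma cyc_ins:
  assumes fin: "finite S" and nS: "n \<notin> S" and q: "q permutes S" and jS: "j \<in> S"
    and q': "q' permutes insert n S" and q'n: "q' n = q j" and q'j: "q' j = n"
    and q'o: "\<And>x. x \<noteq> j \<Longrightarrow> x \<noteq> n \<Longrightarrow> q' x = q x"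
  shows "card (perm_cycle q' ` insert n S) = card (perm_cycle q ` S)"
proof -
  define C where "C = perm_cycle q j"
  have qI: "q permutes insert n S" using q permutes_subset by blast
  have finI: "finite (insert n S)" using fin by simp
  have qn: "q n = n" using permutes_not_in[OF q nS] .
  have CS: "C \<subseteq> S" unfolding C_def using pc_sub[OF q jS] .
  have a: "perm_cycle q' n = insert n C"
  proof
    show "perm_cycle q' n \<subseteq> insert n C"
    proof (rule pc_min)
      fix y assume "y \<in> insert n C"
      moreover have "q j \<in> C" unfolding C_def by (rule pc_closed, rule pc_self)
      moreover have "q y \<in> C" if "y \<in> C" using pc_closed that unfolding C_def by blast
      ultimately show "q' y \<in> insert n C"
        using q'n q'j q'o[of y] by (cases "y = n"; cases "y = j") auto
    qed simp
    have C2: "C = perm_cycle q (q j)"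
      unfolding C_def by (rule pc_eq[OF q fin, symmetric]) (rule pc_closed, rule pc_self)
    have "C \<subseteq> perm_cycle q' n"
      unfolding C2
    proof (rule pc_min)
      show "q j \<in> perm_cycle q' n" using pc_closed[OF pc_self, of q' n] q'n by simp
      fix y assume y: "y \<in> perm_cycle q' n"
      show "q y \<in> perm_cycle q' n"
      proof (cases "y = j")
        case True then show ?thesis using pc_closed[OF pc_self, of q' n] q'n by simp
      next
        case False
        show ?thesis
        proof (cases "y = n")
          case True then show ?thesis using qn y by simp
        next
          case False then show ?thesis using q'o[OF \<open>y \<noteq> j\<close> False] pc_closed[OF y] by simp
        qed
      qed
    qed
    then show "insert n C \<subseteq> perm_cycle q' n" using pc_self by auto
  qed
  have b: "perm_cycle q' i = insert n C" if "i \<in> C" for i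
    using pc_eq[OF q' finI, of i n] a that by auto
  have c: "perm_cycle q' i = perm_cycle q i" if iS: "i \<in> S" and iC: "i \<notin> C" for i
  proof -
    define D where "D = perm_cycle q i"
    have jD: "j \<notin> D" using pc_sym[OF q fin, of j i] iC unfolding C_def D_def by blast
    have nD: "n \<notin> D" using pc_sub[OF q iS] nS unfolding D_def by blast
    have 1: "perm_cycle q' i \<subseteq> D"
    proof (rule pc_min)
      show "i \<in> D" unfolding D_def by (rule pc_self)
      fix y assume "y \<in> D"
      then show "q' y \<in> D" using q'o[of y] jD nD pc_closed[of y q i] unfolding D_def by (metis)
    qed
    have 2: "D \<subseteq> perm_cycle q' i"
      unfolding D_def
    proof (rule pc_min)
      show "i \<in> perm_cycle q' i" by (rule pc_self)
      fix y assume y: "y \<in> perm_cycle q' i"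
      then have "y \<in> D" using 1 by blast
      then have "y \<noteq> j" "y \<noteq> n" using jD nD by auto
      then show "q y \<in> perm_cycle q' i" using q'o pc_closed[OF y] by metis
    qed
    show ?thesis using 1 2 unfolding D_def by blast
  qed
  have eq: "perm_cycle q' ` insert n S = insert (insert n C) (perm_cycle q ` S - {C})"
  proof
    show "perm_cycle q' ` insert n S \<subseteq> insert (insert n C) (perm_cycle q ` S - {C})"
    proof
      fix X assume "X \<in> perm_cycle q' ` insert n S"
      then obtain i where i: "i \<in> insert n S" "X = perm_cycle q' i" by auto
      show "X \<in> insert (insert n C) (perm_cycle q ` S - {C})"
      proof (cases "i = n")
        case True then show ?thesis using a i by simp
      next
        case False
        then have iS: "i \<in> S" using i by simp
        show ?thesis
        proof (cases "i \<in> C")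
          case True then show ?thesis using b i by simp
        next
          case False
          then have "perm_cycle q i \<noteq> C" using pc_self[of i q] by auto
          then show ?thesis using c[OF iS False] i iS by auto
        qed
      qed
    qed
    show "insert (insert n C) (perm_cycle q ` S - {C}) \<subseteq> perm_cycle q' ` insert n S"
    proof
      fix X assume X: "X \<in> insert (insert n C) (perm_cycle q ` S - {C})"
      show "X \<in> perm_cycle q' ` insert n S"
      proof (cases "X = insert n C")
        case True then show ?thesis using a by (metis imageI insertI1)
      next
        case False
        then obtain i where i: "i \<in> S" "X = perm_cycle q i" "X \<noteq> C" using X by auto
        have "i \<notin> C" using pc_eq[OF q fin, of i j] i unfolding C_def by auto
        then show ?thesis using c[OF i(1)] i by auto
      qed
    qed
  qed
  have CI: "C \<in> perm_cycle q ` S" unfolding C_def using jS by simp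
  have nI: "insert n C \<notin> perm_cycle q ` S - {C}" using pc_sub[OF q] nS by blast
  have "card (perm_cycle q' ` insert n S) = Suc (card (perm_cycle q ` S - {C}))"
    unfolding eq using nI fin by simp
  also have "\<dots> = card (perm_cycle q ` S)"
    using CI fin by (simp add: card_Suc_Diff1 del: card_Diff_insert)
  finally show ?thesis .
qed

lemma ins_facts:
  assumes q: "q permutes S" and nS: "n \<notin> S" and bS: "b \<in> S"
  defines "p' \<equiv> Transposition.transpose n b \<circ> q"
  shows "inv q b \<in> S" "q (inv q b) = b" "p' n = b" "p' (inv q b) = n"
    "\<And>x. x \<noteq> inv q b \<Longrightarrow> x \<noteq> n \<Longrightarrow> p' x = q x"
    "p' permutes insert n S" "inv p' n = inv q b" "inv p' b = n"
    "\<And>i. i \<noteq> b \<Longrightarrow> i \<noteq> n \<Longrightarrow> inv p' i = inv q i"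
proof -
  have qn: "q n = n" using permutes_not_in[OF q nS] .
  show jS: "inv q b \<in> S" using permutes_in_image[OF permutes_inv[OF q]] bS by simp
  show qj: "q (inv q b) = b" using permutes_inverses(1)[OF q] .
  have bn: "b \<noteq> n" using bS nS by auto
  show pn: "p' n = b" unfolding p'_def using qn by simp
  show pj: "p' (inv q b) = n" unfolding p'_def using qj by simp
  show po: "p' x = q x" if "x \<noteq> inv q b" "x \<noteq> n" for x
  proof -
    have "q x \<noteq> n" using that qn permutes_inj[OF q] by (metis injD)
    moreover have "q x \<noteq> b" using that permutes_inverses(2)[OF q, of x] by auto
    ultimately show ?thesis unfolding p'_def by simp
  qed
  have qI: "q permutes insert n S" using q permutes_subset by blast
  show pp: "p' permutes insert n S" unfolding p'_def
    by (rule permutes_compose[OF qI permutes_swap_id]) (use bS in auto)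
  show "inv p' n = inv q b" using permutes_inv_eq[OF pp] pj by simp
  show "inv p' b = n" using permutes_inv_eq[OF pp] pn by simp
  show "inv p' i = inv q i" if "i \<noteq> b" "i \<noteq> n" for i
  proof -
    have "inv q i \<noteq> inv q b" using that permutes_inverses(1)[OF q] by metis
    moreover have "inv q i \<noteq> n" using that permutes_inverses(1)[OF q, of i] qn by metis
    ultimately have "p' (inv q i) = i" using po permutes_inverses(1)[OF q] by metis
    then show ?thesis using permutes_inv_eq[OF pp] by simp
  qed
qed

lemma peaks_ins:
  assumes q: "q permutes {1..k}" and bS: "b \<in> {1..k}"
  defines "p' \<equiv> Transposition.transpose (Suc k) b \<circ> q"
  shows "{i \<in> {1..Suc k}. inv p' i < i \<and> p' i < i}
       = insert (Suc k) ({i \<in> {1..k}. inv q i < i \<and> q i < i} - {b, inv q b})"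
proof -
  have nS: "Suc k \<notin> {1..k}" by simp
  note F = ins_facts[OF q nS bS, folded p'_def]
  show ?thesis
  proof (rule set_eqI)
    fix i
    show "i \<in> {i \<in> {1..Suc k}. inv p' i < i \<and> p' i < i} \<longleftrightarrow>
          i \<in> insert (Suc k) ({i \<in> {1..k}. inv q i < i \<and> q i < i} - {b, inv q b})"
    proof (cases "i = Suc k")
      case True then show ?thesis using F(1,3,7) bS by auto
    next
      case nk: False
      show ?thesis
      proof (cases "i = b")
        case True then show ?thesis using F(8) nk by auto
      next
        case nb: False
        show ?thesis
        proof (cases "i = inv q b")
          case True then show ?thesis using F(4) nk by auto
        next
          case False then show ?thesis using F(5)[OF False nk] F(9)[OF nb nk] nk nb by auto
        qed
      qed
    qed
  qed
qed

lemma pderiv_sum': "pderiv (sum f A) = sum (\<lambda>x. pderiv (f x)) A"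
  by (induction A rule: infinite_finite_induct) (auto simp: pderiv_add)

lemma X_pderiv: "[:0,1::int:] * pderiv ([:0,1:] ^ c * (-1) ^ e) = of_nat c * ([:0,1:] ^ c * (-1) ^ e)"
proof -
  have 1: "[:0,1::int:] * pderiv ([:0,1:] ^ c) = of_nat c * [:0,1:] ^ c"
  proof (cases c)
    case 0 then show ?thesis by simp
  next
    case (Suc d)
    have "pderiv [:0,1::int:] = 1" by (simp add: pderiv_pCons)
    then show ?thesis unfolding Suc pderiv_power_Suc
      by (simp add: of_nat_poly mult_ac del: of_nat_Suc)
  qed
  show ?thesis
  proof (cases "even e")
    case True then show ?thesis using 1 by simp
  next
    case False then show ?thesis using 1 by (simp add: pderiv_minus)
  qed
qed

lemma Y_pderiv: "[:1,-1::int:] * pderiv ([:1,-1:] ^ m) = - of_nat m * [:1,-1:] ^ m"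
proof (cases m)
  case 0 then show ?thesis by simp
next
  case (Suc d)
  have "pderiv [:1,-1::int:] = [:-1:]" by (simp add: pderiv_pCons)
  then show ?thesis unfolding Suc pderiv_power_Suc
    by (simp add: of_nat_poly mult_ac del: of_nat_Suc)
qed

lemma pow_card:
  fixes X :: "int poly"
  assumes fin: "finite P" and nP: "n \<notin> P" and nb: "\<not> (b \<in> P \<and> j \<in> P)"
  shows "X ^ card (insert n (P - {b, j})) = X ^ Suc (card P)
          + (of_bool (b \<in> P) + of_bool (j \<in> P)) * (X ^ card P - X ^ Suc (card P))"
proof -
  have c1: "card (insert n (P - {b, j})) = Suc (card (P - {b, j}))" using fin nP by simp
  show ?thesis
  proof (cases "b \<in> P")
    case True
    then have "j \<notin> P" using nb by blast
    then have "P - {b, j} = P - {b}" by auto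
    then have "card (P - {b, j}) = card P - 1" using True fin by simp
    moreover have "card P \<ge> 1" using True fin by (metis One_nat_def Suc_leI card_gt_0_iff empty_iff)
    ultimately show ?thesis using c1 True \<open>j \<notin> P\<close> by simp
  next
    case False
    show ?thesis
    proof (cases "j \<in> P")
      case True
      then have "P - {b, j} = P - {j}" using False by auto
      then have "card (P - {b, j}) = card P - 1" using True fin by simp
      moreover have "card P \<ge> 1" using True fin by (metis One_nat_def Suc_leI card_gt_0_iff empty_iff)
      ultimately show ?thesis using c1 True False by simp
    next
      case F2: False
      then have "P - {b, j} = P" using False by auto
      then show ?thesis using c1 False F2 by simp
    qed
  qed
qed

lemma sum_lin:
  fixes A D s :: "int poly"
  assumes "finite S"
  shows "(\<Sum>b\<in>S. - s * (A + (u b + v b) * D))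
    = - s * (of_nat (card S) * A + ((\<Sum>b\<in>S. u b) + (\<Sum>b\<in>S. v b)) * D)"
proof -
  have "(\<Sum>b\<in>S. - s * (A + (u b + v b) * D)) = (\<Sum>b\<in>S. - s * A + (- s * D) * u b + (- s * D) * v b)"
    by (rule sum.cong) (simp_all add: algebra_simps)
  also have "\<dots> = of_nat (card S) * (- s * A) + (- s * D) * (\<Sum>b\<in>S. u b) + (- s * D) * (\<Sum>b\<in>S. v b)"
    by (simp only: sum.distrib sum_distrib_left[symmetric] sum_constant) (simp add: algebra_simps)
  finally show ?thesis by (simp add: algebra_simps)
qed

lemma step_q:
  assumes q: "q permutes {1..k}"
  shows "[:0,1::int:] ^ cpk (Suc k) q * (-1) ^ (Suc k - cyc (Suc k) q)
     + (\<Sum>b\<in>{1..k}. [:0,1:] ^ cpk (Suc k) (Transposition.transpose (Suc k) b \<circ> q)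
          * (-1) ^ (Suc k - cyc (Suc k) (Transposition.transpose (Suc k) b \<circ> q)))
   = (1 - of_nat k * [:0,1:]) * ([:0,1:] ^ cpk k q * (-1) ^ (k - cyc k q))
     - 2 * (1 - [:0,1:]) * ([:0,1:] * pderiv ([:0,1:] ^ cpk k q * (-1) ^ (k - cyc k q)))"
proof -
  define X where "X = [:0,1::int:]"
  define S where "S = {1..k}"
  define n where "n = Suc k"
  define P where "P = {i \<in> S. inv q i < i \<and> q i < i}"
  define c where "c = card P"
  define s where "s = (-1::int poly) ^ (k - cyc k q)"
  have fin: "finite S" unfolding S_def by simp
  have nS: "n \<notin> S" unfolding S_def n_def by simp
  have SI: "{1..Suc k} = insert n S" unfolding S_def n_def by auto
  have qS: "q permutes S" using q unfolding S_def .
  have PS: "P \<subseteq> S" unfolding P_def by auto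
  have finP: "finite P" using PS fin finite_subset by blast
  have nP: "n \<notin> P" using PS nS by blast
  have ck: "cpk k q = c" unfolding cpk_def c_def P_def S_def ..
  have qn: "q n = n" using permutes_not_in[OF qS nS] .
  have cq: "cpk (Suc k) q = c"
  proof -
    have "{i \<in> {1..Suc k}. inv q i < i \<and> q i < i} = P"
      unfolding SI P_def using qn by auto
    then show ?thesis unfolding cpk_def c_def by simp
  qed
  have cycq: "cyc (Suc k) q = Suc (cyc k q)"
    unfolding cyc_def SI using cyc_fix[OF fin nS qS] unfolding S_def by simp
  have cyck: "cyc k q \<le> k"
    unfolding cyc_def using card_image_le[of "{1..k}" "perm_cycle q"] by simp
  have t1: "X ^ cpk (Suc k) q * (-1) ^ (Suc k - cyc (Suc k) q) = X ^ c * s"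
    unfolding cq cycq s_def by simp
  have t2: "X ^ cpk (Suc k) (Transposition.transpose (Suc k) b \<circ> q)
          * (-1) ^ (Suc k - cyc (Suc k) (Transposition.transpose (Suc k) b \<circ> q))
         = - s * (X ^ Suc c + (of_bool (b \<in> P) + of_bool (inv q b \<in> P)) * (X ^ c - X ^ Suc c))"
    if bS: "b \<in> S" for b
  proof -
    define p' where "p' = Transposition.transpose n b \<circ> q"
    note F = ins_facts[OF qS nS bS, folded p'_def]
    have cy: "cyc (Suc k) p' = cyc k q"
      unfolding cyc_def SI using cyc_ins[OF fin nS qS F(1) F(6) _ F(4) F(5)] F(2,3)
      unfolding S_def by simp
    have pk: "cpk (Suc k) p' = card (insert n (P - {b, inv q b}))"
      unfolding cpk_def p'_def n_def P_def S_def
      using peaks_ins[OF q bS[unfolded S_def]] by simp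
    have nb: "\<not> (b \<in> P \<and> inv q b \<in> P)"
      unfolding P_def using F(2) by auto
    have e: "Suc k - cyc k q = Suc (k - cyc k q)" using cyck by simp
    have pe: "Transposition.transpose (Suc k) b \<circ> q = p'" unfolding p'_def n_def ..
    have "(-1::int poly) ^ (Suc k - cyc (Suc k) p') = - s" unfolding cy e s_def by simp
    then show ?thesis
      unfolding pe pk
      using pow_card[OF finP nP nb, of X] unfolding c_def by simp
  qed
  have sb: "(\<Sum>b\<in>S. (of_bool (b \<in> P) :: int poly)) = of_nat c"
  proof -
    have "S \<inter> {x. x \<in> P} = P" using PS by blast
    then show ?thesis unfolding c_def using fin by simp
  qed
  have sj: "(\<Sum>b\<in>S. (of_bool (inv q b \<in> P) :: int poly)) = of_nat c"
  proof -
    have "(\<Sum>b\<in>S. (of_bool (b \<in> P) :: int poly)) = (\<Sum>b\<in>S. (of_bool (inv q b \<in> P)))"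
      using sum.permute[OF permutes_inv[OF qS], of "\<lambda>b. (of_bool (b \<in> P) :: int poly)"]
      by (simp add: o_def)
    then show ?thesis using sb by simp
  qed
  have sum2: "(\<Sum>b\<in>S. - s * (X ^ Suc c + (of_bool (b \<in> P) + of_bool (inv q b \<in> P)) * (X ^ c - X ^ Suc c)))
     = - s * (of_nat k * X ^ Suc c + (of_nat c + of_nat c) * (X ^ c - X ^ Suc c))"
  proof -
    have "(\<Sum>b\<in>S. - s * (X ^ Suc c + (of_bool (b \<in> P) + of_bool (inv q b \<in> P)) * (X ^ c - X ^ Suc c)))
      = - s * ((\<Sum>b\<in>S. X ^ Suc c) + ((\<Sum>b\<in>S. of_bool (b \<in> P)) + (\<Sum>b\<in>S. of_bool (inv q b \<in> P))) * (X ^ c - X ^ Suc c))"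
      using sum_lin[OF fin] by simp
    also have "\<dots> = - s * (of_nat k * X ^ Suc c + (of_nat c + of_nat c) * (X ^ c - X ^ Suc c))"
      using sb sj unfolding S_def by simp
    finally show ?thesis .
  qed
  have d: "X * pderiv (X ^ c * s) = of_nat c * (X ^ c * s)"
    unfolding X_def s_def by (rule X_pderiv)
  show ?thesis
    unfolding X_def[symmetric] ck s_def[symmetric] d t1
    using sum.cong[OF refl t2, of S] sum2 unfolding S_def n_def
    by (simp add: algebra_simps)
qed

lemma main_rec:
  "(\<Sum>p \<in> {p. p permutes {1..Suc k}}. [:0,1::int:] ^ cpk (Suc k) p * (-1) ^ (Suc k - cyc (Suc k) p))
   = (1 - of_nat k * [:0,1:]) * (\<Sum>q \<in> {p. p permutes {1..k}}. [:0,1:] ^ cpk k q * (-1) ^ (k - cyc k q))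
     - 2 * (1 - [:0,1:]) * ([:0,1:] * pderiv (\<Sum>q \<in> {p. p permutes {1..k}}. [:0,1:] ^ cpk k q * (-1) ^ (k - cyc k q)))"
proof -
  define f where "f p = [:0,1::int:] ^ cpk (Suc k) p * (-1) ^ (Suc k - cyc (Suc k) p)" for p
  define G where "G q = [:0,1::int:] ^ cpk k q * (-1) ^ (k - cyc k q)" for q
  have SI: "{1..Suc k} = insert (Suc k) {1..k}" by auto
  have "(\<Sum>p \<in> {p. p permutes {1..Suc k}}. f p)
      = (\<Sum>b\<in>insert (Suc k) {1..k}. \<Sum>q\<in>{p. p permutes {1..k}}. f (Transposition.transpose (Suc k) b \<circ> q))"
    unfolding SI by (rule sum_over_permutations_insert) auto
  also have "\<dots> = (\<Sum>q\<in>{p. p permutes {1..k}}. \<Sum>b\<in>insert (Suc k) {1..k}. f (Transposition.transpose (Suc k) b \<circ> q))"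
    by (rule sum.swap)
  also have "\<dots> = (\<Sum>q\<in>{p. p permutes {1..k}}. f q + (\<Sum>b\<in>{1..k}. f (Transposition.transpose (Suc k) b \<circ> q)))"
    by (rule sum.cong) simp_all
  also have "\<dots> = (\<Sum>q\<in>{p. p permutes {1..k}}. (1 - of_nat k * [:0,1:]) * G q - 2 * (1 - [:0,1:]) * ([:0,1:] * pderiv (G q)))"
  proof (rule sum.cong)
    fix q assume "q \<in> {p. p permutes {1..k}}"
    then show "f q + (\<Sum>b\<in>{1..k}. f (Transposition.transpose (Suc k) b \<circ> q)) =
      (1 - of_nat k * [:0,1:]) * G q - 2 * (1 - [:0,1:]) * ([:0,1:] * pderiv (G q))"
      unfolding f_def G_def by (intro step_q) simp
  qed simp
  also have "\<dots> = (1 - of_nat k * [:0,1:]) * (\<Sum>q\<in>{p. p permutes {1..k}}. G q) - 2 * (1 - [:0,1:]) * ([:0,1:] * pderiv (\<Sum>q\<in>{p. p permutes {1..k}}. G q))"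
    by (simp add: sum_subtractf sum_distrib_left pderiv_sum')
  finally show ?thesis unfolding f_def G_def .
qed

lemma main_all:
  "(\<Sum>p \<in> {p. p permutes {1..k}}. [:0,1::int:] ^ cpk k p * (-1) ^ (k - cyc k p)) = [:1,-1:] ^ (k div 2)"
proof (induction k)
  case 0
  have "{p. p permutes {1..(0::nat)}} = {id}" by (auto simp: permutes_empty)
  then show ?case by (simp add: cpk_def cyc_def)
next
  case (Suc k)
  define m where "m = k div 2"
  define Y where "Y = [:1,-1::int:]"
  define X where "X = [:0,1::int:]"
  have YX: "1 - X = Y" unfolding X_def Y_def by (simp add: one_pCons)
  have "(\<Sum>p \<in> {p. p permutes {1..Suc k}}. [:0,1::int:] ^ cpk (Suc k) p * (-1) ^ (Suc k - cyc (Suc k) p))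
     = (1 - of_nat k * X) * Y ^ m - 2 * X * (Y * pderiv (Y ^ m))"
    using main_rec[of k, unfolded Suc.IH] unfolding m_def[symmetric] X_def[symmetric] Y_def[symmetric] YX
    by (simp add: algebra_simps)
  also have "\<dots> = (1 - of_nat k * X + 2 * of_nat m * X) * Y ^ m"
    unfolding Y_def Y_pderiv by (simp add: algebra_simps)
  also have "\<dots> = Y ^ (Suc k div 2)"
  proof (cases "even k")
    case True
    then have "k = 2 * m" "Suc k div 2 = m" unfolding m_def by auto
    then show ?thesis by simp
  next
    case False
    then have "k = 2 * m + 1" "Suc k div 2 = Suc m" unfolding m_def by presburger+
    then have "1 - of_nat k * X + 2 * of_nat m * X = Y" using YX by (simp add: algebra_simps)
    then show ?thesis using \<open>Suc k div 2 = Suc m\<close> by simp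
  qed
  finally show ?case unfolding Y_def .
qed

theorem corollary5:
  fixes n :: nat
  assumes "n \<ge> 1"
  shows "(\<Sum>p \<in> {p. p permutes {1..n}}. [:0, 1:] ^ cpk n p * (-1) ^ (n - cyc n p))
         = ([:1, -1:] :: int poly) ^ (n div 2)"
  by (rule main_all)

end
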